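(* Let $\Gamma$ be a connected finite simple graph on $N\ge3$ vertices with $\varepsilon>\frac12$. If $u\ne v$ are vertices with $\mathcal N(u)\cap\mathcal N(v)\ne\emptyset$, then $\mathcal N(u)\triangle\mathcal N(v)\ne\emptyset$ and $$\sum_{w\in\mathcal N(u)\triangle\mathcal N(v)}\Big(\frac{1}{\deg w}-\frac14\Big)>\frac12.$$
   Context: For a finite simple graph $\Gamma=(V,E)$ without isolated vertices, $\deg v$ is the number of neighbours of $v$ and $\mathcal N(v)=\{w\in V: w\sim v\}$; $\triangle$ denotes symmetric difference of sets. The normalized Laplacian acts on functions $f:V\to\mathbb R$ by $\Delta f(v)=f(v)-\frac{1}{\deg v}\sum_{w\sim v}f(w)$; its eigenvalues are $0=\lambda_1\le\lambda_2\le\dots\le\lambda_N$, and $\varepsilon:=\min_i|1-\lambda_i|$. *)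

theory Defs
  imports "HOL-Analysis.Analysis"
begin

definition simple_graph :: "'a set \<Rightarrow> ('a \<Rightarrow> 'a \<Rightarrow> bool) \<Rightarrow> bool" where
  "simple_graph V E \<longleftrightarrow> finite V \<and> (\<forall>x y. E x y \<longrightarrow> x \<in> V \<and> y \<in> V)
     \<and> (\<forall>x y. E x y \<longrightarrow> E y x) \<and> (\<forall>x. \<not> E x x)"

definition connected_graph :: "'a set \<Rightarrow> ('a \<Rightarrow> 'a \<Rightarrow> bool) \<Rightarrow> bool" where
  "connected_graph V E \<longleftrightarrow> (\<forall>x\<in>V. \<forall>y\<in>V. E\<^sup>*\<^sup>* x y)"

definition nbhd :: "'a set \<Rightarrow> ('a \<Rightarrow> 'a \<Rightarrow> bool) \<Rightarrow> 'a \<Rightarrow> 'a set" where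
  "nbhd V E v = {w \<in> V. E w v}"

definition deg :: "'a set \<Rightarrow> ('a \<Rightarrow> 'a \<Rightarrow> bool) \<Rightarrow> 'a \<Rightarrow> nat" where
  "deg V E v = card (nbhd V E v)"

definition sym_diff :: "'a set \<Rightarrow> 'a set \<Rightarrow> 'a set" where
  "sym_diff A B = (A - B) \<union> (B - A)"

definition norm_laplacian :: "'a set \<Rightarrow> ('a \<Rightarrow> 'a \<Rightarrow> bool) \<Rightarrow> ('a \<Rightarrow> real) \<Rightarrow> 'a \<Rightarrow> real" where
  "norm_laplacian V E f v = f v - (\<Sum>w\<in>nbhd V E v. f w) / real (deg V E v)"

definition laplacian_eigenvalue :: "'a set \<Rightarrow> ('a \<Rightarrow> 'a \<Rightarrow> bool) \<Rightarrow> real \<Rightarrow> bool" where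
  "laplacian_eigenvalue V E lam \<longleftrightarrow>
     (\<exists>f. (\<exists>v\<in>V. f v \<noteq> 0) \<and> (\<forall>v\<in>V. norm_laplacian V E f v = lam * f v))"

definition spectral_eps :: "'a set \<Rightarrow> ('a \<Rightarrow> 'a \<Rightarrow> bool) \<Rightarrow> real" where
  "spectral_eps V E = Min {\<bar>1 - lam\<bar> | lam. laplacian_eigenvalue V E lam}"

end

theory Submission imports Defs "HOL-Library.Function_Algebras" begin


lemma cont_coord [continuous_intros]: "continuous_on S (\<lambda>g::'a\<Rightarrow>real. g i)"
  by (rule continuous_on_subset[OF continuous_on_product_coordinates]) simp

lemma compact_box:
  fixes V :: "'a set"
  shows "compact {g::'a\<Rightarrow>real. \<forall>x. g x \<in> (if x \<in> V then {-1..1} else {0})}"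
proof -
  have "compactin (product_topology (\<lambda>i. euclidean) UNIV) (PiE UNIV (\<lambda>x. if x \<in> V then {-1..1::real} else {0}))"
    by (subst compactin_PiE) auto
  moreover have "PiE UNIV (\<lambda>x. if x \<in> V then {-1..1::real} else {0}) = {g::'a\<Rightarrow>real. \<forall>x. g x \<in> (if x \<in> V then {-1..1} else {0})}"
    by (auto simp: PiE_def extensional_def Pi_def)
  ultimately show ?thesis by (simp add: euclidean_product_topology)
qed





locale gr =
  fixes V :: "'a set" and E :: "'a \<Rightarrow> 'a \<Rightarrow> bool"
  assumes finV: "finite V" and EV: "\<And>x y. E x y \<Longrightarrow> x \<in> V \<and> y \<in> V"
    and Esym: "\<And>x y. E x y \<Longrightarrow> E y x"
    and degpos: "\<And>x. x \<in> V \<Longrightarrow> deg V E x > 0"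
begin

definition d :: "'a \<Rightarrow> real" where "d x = real (deg V E x)"
definition P :: "('a \<Rightarrow> real) \<Rightarrow> 'a \<Rightarrow> real" where
  "P g w = (\<Sum>x\<in>nbhd V E w. g x) / d w"
definition ip :: "('a \<Rightarrow> real) \<Rightarrow> ('a \<Rightarrow> real) \<Rightarrow> real" where
  "ip g h = (\<Sum>w\<in>V. d w * g w * h w)"
definition Q where "Q g = ip (P g) (P g)"

lemma dpos: "x \<in> V \<Longrightarrow> d x > 0" using degpos by (simp add: d_def)

lemma nbhd_sum: "(\<Sum>x\<in>nbhd V E w. g x) = (\<Sum>x\<in>V. if E x w then g x else 0)"
  unfolding nbhd_def using finV by (simp add: sum.inter_filter)

lemma P_lin: "P (\<lambda>x. a * g x + b * h x) w = a * P g w + b * P h w"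
  by (simp add: P_def sum.distrib sum_distrib_left add_divide_distrib)

lemma ip_lin1: "ip (\<lambda>x. a * g x + b * h x) k = a * ip g k + b * ip h k"
  by (simp add: ip_def sum.distrib sum_distrib_left algebra_simps)

lemma ip_sym: "ip g h = ip h g"
  by (simp add: ip_def mult_ac)

lemma ip_nonneg: "ip g g \<ge> 0"
  unfolding ip_def by (rule sum_nonneg) (simp add: dpos less_imp_le mult.assoc)

lemma ip_zero: assumes "ip g g = 0" "w \<in> V" shows "g w = 0"
proof -
  have "\<forall>w\<in>V. d w * g w * g w = 0"
    using assms(1) unfolding ip_def
    by (subst sum_nonneg_eq_0_iff[symmetric]) (auto simp: finV dpos less_imp_le mult.assoc)
  with assms(2) dpos show ?thesis by fastforce
qed

lemma ip_cong: "(\<And>w. w \<in> V \<Longrightarrow> g w = g' w) \<Longrightarrow> ip g h = ip g' h"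
  by (simp add: ip_def)

lemma P_selfadj: "ip (P g) h = ip g (P h)"
proof -
  have "ip (P g) h = (\<Sum>w\<in>V. (\<Sum>x\<in>V. if E x w then g x * h w else 0))"
    unfolding ip_def P_def nbhd_sum
    by (rule sum.cong) (auto simp: dpos sum_distrib_right less_imp_neq[OF dpos, symmetric] intro!: sum.cong)
  also have "\<dots> = (\<Sum>x\<in>V. (\<Sum>w\<in>V. if E x w then g x * h w else 0))"
    by (rule sum.swap)
  also have "\<dots> = ip g (P h)"
    unfolding ip_def P_def nbhd_sum
  proof (rule sum.cong[OF refl])
    fix x assume x: "x \<in> V"
    have "d x * g x * ((\<Sum>n\<in>V. if E n x then h n else 0) / d x) = g x * (\<Sum>n\<in>V. if E n x then h n else 0)"
      using dpos[OF x] by simp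
    also have "\<dots> = (\<Sum>w\<in>V. if E x w then g x * h w else 0)"
      by (auto simp: sum_distrib_left intro!: sum.cong dest: Esym)
    finally show "(\<Sum>w\<in>V. if E x w then g x * h w else 0) = d x * g x * ((\<Sum>n\<in>V. if E n x then h n else 0) / d x)" by simp
  qed
  finally show ?thesis .
qed

lemma Q_nonneg: "Q g \<ge> 0" by (simp add: Q_def ip_nonneg)

end



lemma quad_zero:
  fixes a b :: real
  assumes "\<And>t. 2 * t * a + t\<^sup>2 * b \<ge> 0"
  shows "a = 0"
proof (rule ccontr)
  assume a: "a \<noteq> 0"
  define t where "t = - a / (\<bar>b\<bar> + 1)"
  have pos: "\<bar>b\<bar> + 1 > 0" by simp
  have "2 * t * a = - 2 * a\<^sup>2 / (\<bar>b\<bar> + 1)" by (simp add: t_def power2_eq_square)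
  moreover have "t\<^sup>2 * b \<le> a\<^sup>2 / (\<bar>b\<bar> + 1)"
  proof -
    have "t\<^sup>2 * b \<le> t\<^sup>2 * \<bar>b\<bar>" by (simp add: mult_left_mono)
    also have "\<dots> = a\<^sup>2 * \<bar>b\<bar> / (\<bar>b\<bar> + 1)\<^sup>2" by (simp add: t_def power_divide)
    also have "\<dots> \<le> a\<^sup>2 * (\<bar>b\<bar> + 1) / (\<bar>b\<bar> + 1)\<^sup>2"
      by (intro divide_right_mono mult_left_mono) auto
    also have "\<dots> = a\<^sup>2 / (\<bar>b\<bar> + 1)" using pos by (simp add: power2_eq_square)
    finally show ?thesis .
  qed
  ultimately have "2 * t * a + t\<^sup>2 * b \<le> - a\<^sup>2 / (\<bar>b\<bar> + 1)" by simp
  moreover have "a\<^sup>2 / (\<bar>b\<bar> + 1) > 0" using a pos by simp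
  ultimately show False using assms[of t] by linarith
qed

context gr begin

lemma P_cong: "(\<And>x. x \<in> V \<Longrightarrow> g x = g' x) \<Longrightarrow> P g w = P g' w"
  unfolding P_def by (rule arg_cong[where f="\<lambda>s. s / d w"], rule sum.cong) (auto simp: nbhd_def)

lemma P_scale: "P (\<lambda>x. a * g x) w = a * P g w"
  by (simp add: P_def sum_distrib_left)

lemma P_add: "P (\<lambda>x. g x + a * h x) w = P g w + a * P h w"
  by (simp add: P_def sum.distrib sum_distrib_left add_divide_distrib)

lemma ip_scale: "ip (\<lambda>x. a * g x) k = a * ip g k"
  by (simp add: ip_def sum_distrib_left algebra_simps)

lemma ip_add: "ip (\<lambda>x. g x + a * h x) k = ip g k + a * ip h k"
  by (simp add: ip_def sum.distrib sum_distrib_left algebra_simps)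

lemma ip_diff: "ip (\<lambda>x. g x - a * h x) k = ip g k - a * ip h k"
  by (simp add: ip_def sum_subtractf sum_distrib_left algebra_simps)

lemma Q_expand: "Q (\<lambda>x. g x + t * h x) = Q g + 2 * t * ip (P g) (P h) + t\<^sup>2 * Q h"
proof -
  have "P (\<lambda>x. g x + t * h x) = (\<lambda>w. P g w + t * P h w)" by (simp add: P_add fun_eq_iff)
  then have "Q (\<lambda>x. g x + t * h x) = ip (\<lambda>w. P g w + t * P h w) (\<lambda>w. P g w + t * P h w)"
    by (simp add: Q_def)
  also have "\<dots> = Q g + 2 * t * ip (P g) (P h) + t\<^sup>2 * Q h"
    unfolding ip_add Q_def
    by (subst (1 2) ip_sym) (simp add: ip_add ip_sym[of "P h" "P g"] power2_eq_square algebra_simps)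
  finally show ?thesis .
qed

lemma N_expand: "ip (\<lambda>x. g x + t * h x) (\<lambda>x. g x + t * h x) = ip g g + 2 * t * ip g h + t\<^sup>2 * ip h h"
  unfolding ip_add
  by (subst (1 2) ip_sym) (simp add: ip_add ip_sym[of h g] power2_eq_square algebra_simps)

lemma d_ge1: "x \<in> V \<Longrightarrow> d x \<ge> 1"
  using degpos[of x] by (simp add: d_def)

lemma nbhd_sub: "nbhd V E w \<subseteq> V" by (auto simp: nbhd_def)

lemma minimizer:
  assumes "V \<noteq> {}"
  shows "\<exists>g m. (\<exists>w\<in>V. g w \<noteq> 0) \<and> 0 \<le> m \<and> (\<forall>w\<in>V. P (P g) w = m * g w) \<and> (\<forall>h. m * ip h h \<le> Q h)"
proof -
  define K where "K = {g::'a\<Rightarrow>real. \<forall>x. g x \<in> (if x \<in> V then {-1..1} else {0})} \<inter> {g. ip g g = 1}"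
  have contN: "continuous_on UNIV (\<lambda>g. ip g g)"
    unfolding ip_def by (intro continuous_intros)
  have "compact K" unfolding K_def
    by (intro compact_Int_closed compact_box closed_Collect_eq contN continuous_on_const)
  obtain w0 where w0: "w0 \<in> V" using assms by auto
  define g1 where "g1 = (\<lambda>x. if x = w0 then 1 / sqrt (d w0) else 0)"
  have "g1 \<in> K"
  proof -
    have "ip g1 g1 = d w0 * (1 / sqrt (d w0)) * (1 / sqrt (d w0))"
      unfolding ip_def g1_def using w0 finV by (simp add: if_distrib cong: if_cong)
    also have "\<dots> = 1" using dpos[OF w0] by (simp add: real_sqrt_mult[symmetric])
    finally have "ip g1 g1 = 1" .
    moreover have "1 / sqrt (d w0) \<le> 1" using d_ge1[OF w0] by simp
    moreover have "1 / sqrt (d w0) \<ge> -1" using dpos[OF w0] by (smt (verit) real_sqrt_gt_zero zero_le_divide_1_iff)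
    ultimately show ?thesis unfolding K_def g1_def using w0 by auto
  qed
  then have "K \<noteq> {}" by auto
  have contQ: "continuous_on K Q"
    unfolding Q_def ip_def P_def by (intro continuous_intros) (auto dest!: dpos)
  obtain g0 where g0K: "g0 \<in> K" and g0min: "\<And>y. y \<in> K \<Longrightarrow> Q g0 \<le> Q y"
    using continuous_attains_inf[OF \<open>compact K\<close> \<open>K \<noteq> {}\<close> contQ] by blast
  define m where "m = Q g0"
  have N1: "ip g0 g0 = 1" using g0K by (simp add: K_def)
  have m0: "0 \<le> m" by (simp add: m_def Q_nonneg)
  have Pzero: "P h w = 0" if "\<And>x. x \<in> V \<Longrightarrow> h x = 0" for h w
  proof -
    have "P h w = P (\<lambda>x. 0) w" by (rule P_cong) (use that in auto)
    then show ?thesis by (simp add: P_def)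
  qed
  have bound: "m * ip h h \<le> Q h" for h
  proof (cases "ip h h = 0")
    case True
    then have "\<And>x. x \<in> V \<Longrightarrow> h x = 0" using ip_zero by blast
    then have "P h = (\<lambda>w. 0)" using Pzero by blast
    then have "Q h = 0" by (simp add: Q_def ip_def)
    then show ?thesis using True by simp
  next
    case False
    define c where "c = ip h h"
    have c0: "c > 0" using False ip_nonneg[of h] by (simp add: c_def)
    define h' where "h' = (\<lambda>x. if x \<in> V then (1 / sqrt c) * h x else 0)"
    have h'V: "x \<in> V \<Longrightarrow> h' x = (1 / sqrt c) * h x" for x by (simp add: h'_def)
    have "ip h' h' = ip (\<lambda>x. (1 / sqrt c) * h x) (\<lambda>x. (1 / sqrt c) * h x)"
      by (simp add: ip_def h'_def)
    also have "\<dots> = (1 / sqrt c) * (1 / sqrt c) * c"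
      by (subst ip_scale, subst ip_sym, subst ip_scale) (simp add: c_def)
    also have "\<dots> = 1" using c0 by (simp add: real_sqrt_mult[symmetric])
    finally have Nh': "ip h' h' = 1" .
    have box: "h' x \<in> (if x \<in> V then {-1..1} else {0})" for x
    proof (cases "x \<in> V")
      case True
      have "d x * h x * h x \<le> c"
        unfolding c_def ip_def
        by (rule member_le_sum[OF True]) (auto simp: dpos less_imp_le mult.assoc finV)
      moreover have "h x * h x \<le> d x * h x * h x"
        using mult_right_mono[OF d_ge1[OF True], of "h x * h x"] by (simp add: mult.assoc)
      ultimately have "(h x)\<^sup>2 \<le> c" by (simp add: power2_eq_square)
      then have "\<bar>h x\<bar> \<le> sqrt c" using real_sqrt_le_mono by fastforce
      then have "\<bar>h' x\<bar> \<le> 1" using True c0 by (simp add: h'_def abs_mult divide_le_eq_1)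
      then show ?thesis using True by auto
    qed (simp add: h'_def)
    have "h' \<in> K" using box Nh' by (simp add: K_def)
    then have "m \<le> Q h'" using g0min by (simp add: m_def)
    also have "Q h' = (1 / sqrt c) * (1 / sqrt c) * Q h"
    proof -
      have "P h' = (\<lambda>w. (1 / sqrt c) * P h w)"
        by (rule ext, subst P_scale[symmetric], rule P_cong) (simp add: h'V)
      then show ?thesis unfolding Q_def
        by (simp only:) (subst ip_scale, subst ip_sym, subst ip_scale, simp)
    qed
    also have "\<dots> = Q h / c" using c0 by (simp add: real_sqrt_mult[symmetric])
    finally show ?thesis using c0 by (simp add: c_def[symmetric] pos_le_divide_eq mult.commute)
  qed
  have lag: "ip (P g0) (P h) = m * ip g0 h" for h
  proof -
    have "2 * t * (ip (P g0) (P h) - m * ip g0 h) + t\<^sup>2 * (Q h - m * ip h h) \<ge> 0" for t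
      using bound[of "\<lambda>x. g0 x + t * h x"] unfolding Q_expand N_expand N1 m_def
      by (simp add: algebra_simps)
    then show ?thesis using quad_zero by fastforce
  qed
  define k where "k = (\<lambda>x. P (P g0) x - m * g0 x)"
  have "ip k h = 0" for h
    unfolding k_def ip_diff using lag[of h] P_selfadj[of "P g0" h] by simp
  then have "ip k k = 0" by blast
  then have "\<forall>w\<in>V. P (P g0) w = m * g0 w" using ip_zero by (force simp: k_def)
  moreover have "\<exists>w\<in>V. g0 w \<noteq> 0"
  proof (rule ccontr)
    assume "\<not> ?thesis"
    then have "ip g0 g0 = 0" by (simp add: ip_def)
    then show False using N1 by simp
  qed
  ultimately show ?thesis using m0 bound by blast
qed

lemma nl_eq: "norm_laplacian V E f w = f w - P f w"
  by (simp add: norm_laplacian_def P_def d_def)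

lemma eigen_from_min:
  assumes "\<exists>w\<in>V. g w \<noteq> 0" "0 \<le> m" "\<forall>w\<in>V. P (P g) w = m * g w"
  shows "\<exists>lam. laplacian_eigenvalue V E lam \<and> \<bar>1 - lam\<bar> = sqrt m"
proof -
  define s where "s = sqrt m"
  have s0: "s \<ge> 0" and ss: "s * s = m" using assms(2) by (auto simp: s_def)
  define hh where "hh = (\<lambda>x. P g x + s * g x)"
  have Phh: "P hh w = s * hh w" if "w \<in> V" for w
    using assms(3) that unfolding hh_def P_add ss[symmetric] by (simp add: algebra_simps)
  show ?thesis
  proof (cases "\<exists>w\<in>V. hh w \<noteq> 0")
    case True
    have "laplacian_eigenvalue V E (1 - s)"
      unfolding laplacian_eigenvalue_def
      by (rule exI[of _ hh]) (use True Phh in \<open>auto simp: nl_eq algebra_simps\<close>)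
    then show ?thesis using s0 by (auto simp: s_def)
  next
    case False
    have "P g w = - s * g w" if "w \<in> V" for w
    proof -
      have "P g w + s * g w = 0" using False that by (simp add: hh_def)
      then show ?thesis by linarith
    qed
    then have "laplacian_eigenvalue V E (1 + s)"
      unfolding laplacian_eigenvalue_def
      by (intro exI[of _ g]) (use assms(1) in \<open>auto simp: nl_eq algebra_simps\<close>)
    then show ?thesis using s0 by (auto simp: s_def)
  qed
qed

end



interpretation fvs: vector_space "\<lambda>(c::real) (f::'b \<Rightarrow> real). (\<lambda>x. c * f x)"
  by unfold_locales (auto simp: fun_eq_iff algebra_simps func_plus)

lemma sum_fun_apply': "(sum F S) x = (\<Sum>v\<in>S. F v x)" for F :: "'c \<Rightarrow> 'b \<Rightarrow> real"
  by (induction S rule: infinite_finite_induct) (auto simp: func_plus func_zero)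

context gr begin

lemma finite_eigs: "finite {lam. laplacian_eigenvalue V E lam}"
proof -
  define L where "L = {lam. laplacian_eigenvalue V E lam}"
  define ev where "ev lam = (\<lambda>x. if x \<in> V then (SOME f. (\<exists>v\<in>V. f v \<noteq> 0) \<and> (\<forall>v\<in>V. norm_laplacian V E f v = lam * f v)) x else 0)" for lam
  have evp: "(\<exists>v\<in>V. ev lam v \<noteq> 0) \<and> (\<forall>v\<in>V. P (ev lam) v = (1 - lam) * ev lam v) \<and> (\<forall>x. x \<notin> V \<longrightarrow> ev lam x = 0)"
    if "lam \<in> L" for lam
  proof -
    define f where "f = (SOME f. (\<exists>v\<in>V. f v \<noteq> 0) \<and> (\<forall>v\<in>V. norm_laplacian V E f v = lam * f v))"
    have f: "(\<exists>v\<in>V. f v \<noteq> 0) \<and> (\<forall>v\<in>V. norm_laplacian V E f v = lam * f v)"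
    proof -
      have ex: "\<exists>f. (\<exists>v\<in>V. f v \<noteq> 0) \<and> (\<forall>v\<in>V. norm_laplacian V E f v = lam * f v)"
        using that by (simp add: L_def laplacian_eigenvalue_def)
      show ?thesis unfolding f_def by (rule someI_ex[OF ex])
    qed
    have e: "ev lam = (\<lambda>x. if x \<in> V then f x else 0)" unfolding ev_def f_def by (rule refl)
    have "P (ev lam) v = P f v" for v by (rule P_cong) (simp add: e)
    then show ?thesis using f unfolding e nl_eq by (auto simp: algebra_simps)
  qed
  have pos: "ip (ev lam) (ev lam) > 0" if "lam \<in> L" for lam
    using evp[OF that] ip_nonneg[of "ev lam"] ip_zero[of "ev lam"] by force
  have orth: "ip (ev l1) (ev l2) = 0" if "l1 \<in> L" "l2 \<in> L" "l1 \<noteq> l2" for l1 l2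
  proof -
    have A: "ip (P (ev l1)) (ev l2) = (1 - l1) * ip (ev l1) (ev l2)"
      using evp[OF that(1)] by (subst ip_scale[symmetric], intro ip_cong) simp
    have B: "ip (ev l1) (P (ev l2)) = (1 - l2) * ip (ev l1) (ev l2)"
      using evp[OF that(2)] by (subst (1 2) ip_sym, subst ip_scale[symmetric], intro ip_cong) simp
    have "(1 - l1) * ip (ev l1) (ev l2) = (1 - l2) * ip (ev l1) (ev l2)"
      using A B P_selfadj[of "ev l1" "ev l2"] by auto
    then have "(l2 - l1) * ip (ev l1) (ev l2) = 0" by (simp add: algebra_simps)
    then show ?thesis using that(3) by simp
  qed
  have inj: "inj_on ev L"
  proof
    fix l1 l2 assume l: "l1 \<in> L" "l2 \<in> L" "ev l1 = ev l2"
    show "l1 = l2"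
    proof (rule ccontr)
      assume "l1 \<noteq> l2"
      then have "ip (ev l1) (ev l2) = 0" using orth l by blast
      then show False using pos[OF l(1)] l(3) by simp
    qed
  qed
  have ind: "fvs.independent (ev ` L)"
  proof (rule notI)
    assume "fvs.dependent (ev ` L)"
    then obtain T u v0 where T: "finite T" "T \<subseteq> ev ` L" "(\<Sum>v\<in>T. (\<lambda>x. u v * v x)) = 0" and v0: "v0 \<in> T" "u v0 \<noteq> 0"
      unfolding fvs.dependent_explicit by blast
    obtain l0 where l0: "l0 \<in> L" "v0 = ev l0" using T(2) v0(1) by blast
    have "0 = ip (\<Sum>v\<in>T. (\<lambda>x. u v * v x)) v0" by (simp add: T(3) ip_def)
    also have "\<dots> = (\<Sum>w\<in>V. \<Sum>v\<in>T. d w * (u v * v w) * v0 w)"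
      by (simp add: ip_def sum_fun_apply' sum_distrib_left sum_distrib_right)
    also have "\<dots> = (\<Sum>v\<in>T. \<Sum>w\<in>V. d w * (u v * v w) * v0 w)" by (rule sum.swap)
    also have "\<dots> = (\<Sum>v\<in>T. u v * ip v v0)" by (simp add: ip_def sum_distrib_left mult_ac)
    also have "\<dots> = u v0 * ip v0 v0 + (\<Sum>v\<in>T - {v0}. u v * ip v v0)"
      by (rule sum.remove[OF T(1) v0(1)])
    also have "(\<Sum>v\<in>T - {v0}. u v * ip v v0) = 0"
    proof (rule sum.neutral, rule ballI)
      fix v assume v: "v \<in> T - {v0}"
      then obtain l where l: "l \<in> L" "v = ev l" using T(2) by blast
      then have "l \<noteq> l0" using v l0 by auto
      then show "u v * ip v v0 = 0" using orth[OF l(1) l0(1)] l l0 by simp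
    qed
    finally have "u v0 * ip v0 v0 = 0" by simp
    then show False using v0(2) pos[OF l0(1)] l0(2) by simp
  qed
  define B where "B = (\<lambda>y. (\<lambda>x::'a. if x = y then 1 else (0::real))) ` V"
  have span: "ev ` L \<subseteq> fvs.span B"
  proof
    fix t assume "t \<in> ev ` L"
    then obtain l where l: "l \<in> L" "t = ev l" by blast
    have teq: "t = (\<Sum>y\<in>V. (\<lambda>x. t y * (if x = y then 1 else 0)))"
    proof
      fix x
      show "t x = (\<Sum>y\<in>V. (\<lambda>x. t y * (if x = y then 1 else 0))) x"
        unfolding sum_fun_apply' using evp[OF l(1)] l(2) finV by (auto simp: if_distrib cong: if_cong)
    qed
    show "t \<in> fvs.span B"
      by (subst teq, intro fvs.span_sum fvs.span_scale fvs.span_base) (auto simp: B_def)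
  qed
  have "finite (ev ` L)"
    using fvs.independent_span_bound[OF _ ind span] finV by (simp add: B_def)
  then show ?thesis using finite_imageD[OF _ inj] by (simp add: L_def)
qed

end



theorem mainTheorem14:
  fixes V :: "'a set" and E :: "'a \<Rightarrow> 'a \<Rightarrow> bool" and u v :: 'a
  assumes "simple_graph V E"
    and "connected_graph V E"
    and "card V \<ge> 3"
    and "spectral_eps V E > 1/2"
    and "u \<in> V" and "v \<in> V" and "u \<noteq> v"
    and "nbhd V E u \<inter> nbhd V E v \<noteq> {}"
  shows "sym_diff (nbhd V E u) (nbhd V E v) \<noteq> {}
    \<and> (\<Sum>w\<in>sym_diff (nbhd V E u) (nbhd V E v). 1 / real (deg V E w) - 1/4) > 1/2"
proof -
  have finV: "finite V" and EV: "\<And>x y. E x y \<Longrightarrow> x \<in> V \<and> y \<in> V"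
    and Esym: "\<And>x y. E x y \<Longrightarrow> E y x"
    using assms(1) unfolding simple_graph_def by blast+
  have degpos: "deg V E x > 0" if x: "x \<in> V" for x
  proof -
    obtain y where y: "y \<in> V" "y \<noteq> x"
    proof -
      have "\<not> V \<subseteq> {x}"
      proof
        assume "V \<subseteq> {x}"
        then have "card V \<le> card {x}" by (rule card_mono[rotated]) simp
        then show False using assms(3) by simp
      qed
      then show ?thesis using that by blast
    qed
    have "E\<^sup>*\<^sup>* x y" using assms(2) x y(1) unfolding connected_graph_def by blast
    then obtain z where "E x z" using y(2) by (cases rule: converse_rtranclpE) auto
    then have "z \<in> nbhd V E x" using EV Esym by (auto simp: nbhd_def)
    moreover have "finite (nbhd V E x)" using finV by (simp add: nbhd_def)
    ultimately show ?thesis unfolding deg_def by (auto simp: card_gt_0_iff)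
  qed
  interpret gr V E using finV EV Esym degpos by unfold_locales blast+
  have "V \<noteq> {}" using assms(5) by auto
  then obtain g m where gm: "\<exists>w\<in>V. g w \<noteq> 0" "0 \<le> m" "\<forall>w\<in>V. P (P g) w = m * g w"
    and bound: "\<And>h. m * ip h h \<le> Q h"
    using minimizer by blast
  obtain lam where lam: "laplacian_eigenvalue V E lam" "\<bar>1 - lam\<bar> = sqrt m"
    using eigen_from_min[OF gm] by blast
  have "spectral_eps V E \<le> sqrt m"
    unfolding spectral_eps_def
  proof (rule Min_le)
    have "{\<bar>1 - lam\<bar> |lam. laplacian_eigenvalue V E lam} = (\<lambda>l. \<bar>1 - l\<bar>) ` {lam. laplacian_eigenvalue V E lam}"
      by auto
    then show "finite {\<bar>1 - lam\<bar> |lam. laplacian_eigenvalue V E lam}" using finite_eigs by simp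
    show "sqrt m \<in> {\<bar>1 - lam\<bar> |lam. laplacian_eigenvalue V E lam}" using lam(1) lam(2)[symmetric] by blast
  qed
  then have "sqrt m > 1/2" using assms(4) by linarith
  then have m4: "m > 1/4"
    using gm(2) by (metis real_sqrt_four real_sqrt_less_iff real_sqrt_divide real_sqrt_one)
  define A where "A = nbhd V E u"
  define B where "B = nbhd V E v"
  define SD where "SD = sym_diff A B"
  have finA: "finite A" "finite B" using finV by (auto simp: A_def B_def nbhd_def)
  have SDV: "SD \<subseteq> V" by (auto simp: SD_def sym_diff_def A_def B_def nbhd_def)
  define f where "f = (\<lambda>x. (if x = u then 1 else 0) - (if x = v then (1::real) else 0))"
  have Nf: "ip f f = d u + d v"
  proof -
    have "ip f f = (\<Sum>w\<in>V. (if w = u then d w else 0) + (if w = v then d w else 0))"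
      unfolding ip_def f_def by (rule sum.cong) (use assms(7) in auto)
    also have "\<dots> = d u + d v" using finV assms(5,6) by (simp add: sum.distrib)
    finally show ?thesis .
  qed
  have Pf: "P f w = ((if u \<in> nbhd V E w then 1 else 0) - (if v \<in> nbhd V E w then 1 else 0)) / d w" for w
  proof -
    have fin: "finite (nbhd V E w)" using finV by (simp add: nbhd_def)
    show ?thesis unfolding P_def f_def using fin by (simp add: sum_subtractf)
  qed
  have memA: "u \<in> nbhd V E w \<longleftrightarrow> w \<in> A" "v \<in> nbhd V E w \<longleftrightarrow> w \<in> B" for w
    using assms(5,6) EV Esym by (auto simp: A_def B_def nbhd_def)
  have Qf: "Q f = (\<Sum>w\<in>SD. 1 / d w)"
  proof -
    have "Q f = (\<Sum>w\<in>V. if w \<in> SD then 1 / d w else 0)"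
      unfolding Q_def ip_def
    proof (rule sum.cong[OF refl])
      fix w assume w: "w \<in> V"
      show "d w * P f w * P f w = (if w \<in> SD then 1 / d w else 0)"
        unfolding Pf memA using dpos[OF w] by (auto simp: SD_def sym_diff_def power2_eq_square)
    qed
    also have "\<dots> = (\<Sum>w\<in>SD. 1 / d w)"
    proof -
      have "{w \<in> V. w \<in> SD} = SD" using SDV by auto
      then show ?thesis using finV by (simp add: sum.inter_filter[symmetric])
    qed
    finally show ?thesis .
  qed
  have du: "d u > 0" "d v > 0" using dpos assms(5,6) by auto
  have S1: "(\<Sum>w\<in>SD. 1 / d w) > (d u + d v) / 4"
  proof -
    have "(1/4) * (d u + d v) < m * (d u + d v)" using m4 du by (intro mult_strict_right_mono) auto
    also have "\<dots> \<le> (\<Sum>w\<in>SD. 1 / d w)" using bound[of f] Nf Qf by simp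
    finally show ?thesis by simp
  qed
  have cardSD: "real (card SD) \<le> d u + d v - 2"
  proof -
    have c1: "card A = card (A - B) + card (A \<inter> B)"
    proof -
      have "A = (A - B) \<union> (A \<inter> B)" by auto
      then have "card A = card ((A - B) \<union> (A \<inter> B))" by simp
      also have "\<dots> = card (A - B) + card (A \<inter> B)" by (rule card_Un_disjoint) (use finA in auto)
      finally show ?thesis .
    qed
    have c2: "card B = card (B - A) + card (A \<inter> B)"
    proof -
      have "B = (B - A) \<union> (A \<inter> B)" by auto
      then have "card B = card ((B - A) \<union> (A \<inter> B))" by simp
      also have "\<dots> = card (B - A) + card (A \<inter> B)" by (rule card_Un_disjoint) (use finA in auto)
      finally show ?thesis .
    qed
    have c3: "card SD = card (A - B) + card (B - A)"
      unfolding SD_def sym_diff_def using finA by (intro card_Un_disjoint) auto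
    have "card (A \<inter> B) \<ge> 1" using assms(8) finA by (simp add: A_def B_def Suc_le_eq card_gt_0_iff)
    then show ?thesis using c1 c2 c3 by (simp add: d_def A_def B_def deg_def)
  qed
  have "(\<Sum>w\<in>SD. 1 / d w - 1/4) = (\<Sum>w\<in>SD. 1 / d w) - real (card SD) / 4"
    by (simp add: sum_subtractf)
  also have "\<dots> > 1/2" using S1 cardSD by (simp add: field_simps)
  finally have main: "(\<Sum>w\<in>SD. 1 / d w - 1/4) > 1/2" .
  then have "SD \<noteq> {}" by auto
  then show ?thesis using main by (simp add: SD_def A_def B_def d_def)
qed


end
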